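(* Let $X$ be a compact Hausdorff space, $A=C(X)$, $H_A=l_2(A)$. Let $(F_1,F_2,\dots)\in H'_A$ and let $E\subseteq X$ be the set of points at which the point-wise sum $x\mapsto\sum_i\overline{F_i(x)}F_i(x)$ is continuous. Then $(F_1,F_2,\dots)$ is the representing sequence of some element $F\in H''_A$ if and only if for each $f=(f_1,f_2,\dots)\in H'_A$ there exists a continuous function $\alpha_f\in C(X)$ such that the point-wise sum $x\mapsto \sum_i \overline{F_i(x)}f_i(x)$ coincides with $\alpha_f$ on $E$. In this case $F(f)=\alpha_f$ for all $f\in H'_A$.
   Context: $H_A=l_2(A)$ is the set of sequences $(a_1,a_2,\dots)$ in $A$ with $\sum_i a_i^*a_i$ norm convergent; it is a right Hilbert $A$-module with componentwise action and inner product $\langle a,b\rangle=\sum_i a_i^*b_i$, with standard basis vectors $e_i$. The dual $H'_A$ (bounded $A$-linear maps $H_A\to A$) is identified, via $f\mapsto (f(e_i)^* )_i$ (so $f(x)=\sum_i f_i^*x_i$), with the set of sequences $(f_1,f_2,\dots)$, $f_i\in C(X)$, such that $\sup_N\|\sum_{i=1}^N\overline{f_i}f_i\|<\infty$ (sup norm), with norm $\|f\|^2=\sup_N\|\sum_{i=1}^N\overline{f_i}f_i\|$ and componentwise right $A$-module structure. The second dual $H''_A$ is the set of bounded $A$-linear maps $H'_A\to A$. Let $\hat e_i\in H'_A$ be the sequence with $1$ in place $i$ and $0$ elsewhere. An element $F\in H''_A$ is represented by the sequence $(F_i)$ with $F_i=F(\hat e_i)^*$ (the canonical isometric embedding $H''_A\subseteq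 H'_A$). For every point $x$ the point-wise sums above converge, since the sequences $(F_i(x))$, $(f_i(x))$ lie in $l_2(\mathbb C)$. *)

theory Defs
  imports "HOL-Analysis.Analysis"
begin

text \<open>X is the type 'a (a topological space, Hausdorff and compact assumed in the theorem);
A = C(X) is the set of continuous complex-valued functions on X.\<close>

definition CX :: "('a::topological_space \<Rightarrow> complex) set" where
  "CX = {a. continuous_on UNIV a}"

text \<open>The dual module H'_A, identified with sequences (f_1, f_2, ...) in C(X) with
  sup_N || sum_{i<N} conj(f_i) f_i || finite.\<close>
definition dual_HA :: "(nat \<Rightarrow> 'a::topological_space \<Rightarrow> complex) set" where
  "dual_HA = {f. (\<forall>i. f i \<in> CX) \<and>
      (\<exists>B. \<forall>N x. cmod (\<Sum>i<N. cnj (f i x) * f i x) \<le> B)}"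

definition dual_norm :: "(nat \<Rightarrow> 'a::topological_space \<Rightarrow> complex) \<Rightarrow> real" where
  "dual_norm f = sqrt (Sup {cmod (\<Sum>i<N. cnj (f i x) * f i x) | N x. True})"

text \<open>The second dual H''_A: bounded A-linear maps H'_A \<rightarrow> A
  (right module action on H'_A componentwise). Only the values on H'_A matter.\<close>
definition bidual_HA :: "((nat \<Rightarrow> 'a::topological_space \<Rightarrow> complex) \<Rightarrow> ('a \<Rightarrow> complex)) set" where
  "bidual_HA = {\<Phi>.
      (\<forall>f\<in>dual_HA. \<Phi> f \<in> CX) \<and>
      (\<forall>f\<in>dual_HA. \<forall>g\<in>dual_HA. \<Phi> (\<lambda>i x. f i x + g i x) = (\<lambda>x. \<Phi> f x + \<Phi> g x)) \<and>
      (\<forall>f\<in>dual_HA. \<forall>a\<in>CX. \<Phi> (\<lambda>i x. f i x * a x) = (\<lambda>x. \<Phi> f x * a x)) \<and>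
      (\<exists>C. \<forall>f\<in>dual_HA. \<forall>x. cmod (\<Phi> f x) \<le> C * dual_norm f)}"

definition hat_e :: "nat \<Rightarrow> nat \<Rightarrow> 'a \<Rightarrow> complex" where
  "hat_e i = (\<lambda>j x. if j = i then 1 else 0)"

definition rep_seq :: "((nat \<Rightarrow> 'a \<Rightarrow> complex) \<Rightarrow> ('a \<Rightarrow> complex)) \<Rightarrow> nat \<Rightarrow> 'a \<Rightarrow> complex" where
  "rep_seq \<Phi> = (\<lambda>i x. cnj (\<Phi> (hat_e i) x))"

end

theory Submission
  imports Defs "HOL-Analysis.Analysis"
begin


lemma haus_eucl: "Hausdorff_space (euclidean::'a::t2_space topology)"
  unfolding Hausdorff_space_def by (metis disjnt_def hausdorff open_openin)

lemma normal_eucl: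
  assumes "compact (UNIV::'a::t2_space set)"
  shows "normal_space (euclidean::'a topology)"
proof -
  have "compact_space (euclidean::'a topology)" using assms by (simp add: compact_space_def)
  then show ?thesis using compact_Hausdorff_or_regular_imp_normal_space haus_eucl by blast
qed

lemma bump:
  assumes "compact (UNIV::'a::t2_space set)" "open W" "y \<in> W"
  shows "\<exists>a::'a\<Rightarrow>real. continuous_on UNIV a \<and> (\<forall>z. 0 \<le> a z \<and> a z \<le> 1) \<and> a y = 1 \<and> (\<forall>z. z \<notin> W \<longrightarrow> a z = 0)"
proof -
  have "closed (-W)" using assms(2) by (rule closed_Compl)
  then have c1: "closedin euclidean (-W)" by (simp only: closed_closedin)
  have "closed {y}" by (rule closed_singleton)
  then have c2: "closedin euclidean {y}" by (simp only: closed_closedin)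
  have c3: "disjnt (-W) {y}" using assms(3) by (simp add: disjnt_def)
  obtain f where f: "continuous_map euclidean (top_of_set {0::real..1}) f" "f ` (-W) \<subseteq> {0}" "f ` {y} \<subseteq> {1}"
    using Urysohn_lemma[OF normal_eucl[OF assms(1)] c1 c2 c3, of 0 1] by auto
  have f2: "continuous_map euclidean euclidean f" "f ` UNIV \<subseteq> {0..1}"
    using f(1) unfolding continuous_map_in_subtopology by auto
  have "continuous_on UNIV f" using f2(1) by (simp only: continuous_map_iff_continuous2)
  moreover have "\<forall>z. 0 \<le> f z \<and> f z \<le> 1"
  proof
    fix z have "f z \<in> {0..1}" using f2(2) by blast
    then show "0 \<le> f z \<and> f z \<le> 1" by simp
  qed
  moreover have "f y = 1" using f(3) by auto
  moreover have "\<forall>z. z \<notin> W \<longrightarrow> f z = 0" using f(2) by auto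
  ultimately show ?thesis by blast
qed

lemma baire_dense:
  fixes G :: "nat \<Rightarrow> 'a::t2_space set"
  assumes "compact (UNIV::'a::t2_space set)"
    and "\<And>n. open (G n)" and "\<And>n V. open V \<Longrightarrow> V \<noteq> {} \<Longrightarrow> V \<inter> G n \<noteq> {}"
  shows "closure (\<Inter>n. G n) = UNIV"
proof -
  have cs: "compact_space (euclidean::'a topology)" using assms(1) by (simp add: compact_space_def)
  have "euclidean closure_of \<Inter>(range G) = topspace euclidean"
  proof (rule Baire_category)
    show "completely_metrizable_space (euclidean::'a topology) \<or> locally_compact_space (euclidean::'a topology) \<and> regular_space (euclidean::'a topology)"
    proof -
      have "locally_compact_space (euclidean::'a topology)" by (rule compact_imp_locally_compact_space[OF cs])
      moreover have "regular_space (euclidean::'a topology)" by (rule compact_Hausdorff_imp_regular_space[OF cs haus_eucl])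
      ultimately show ?thesis by (intro disjI2 conjI)
    qed
    show "countable (range G)" by simp
    fix T assume "T \<in> range G"
    then obtain n where T: "T = G n" by auto
    have "closure T = UNIV"
    proof (rule ccontr)
      assume "closure T \<noteq> UNIV"
      then have "open (- closure T)" "- closure T \<noteq> {}" by auto
      then have "(- closure T) \<inter> G n \<noteq> {}" using assms(3) by blast
      then obtain z where "z \<notin> closure T" "z \<in> T" using T by blast
      then show False using closure_subset[of T] by blast
    qed
    moreover have "openin euclidean T" using assms(2)[of n] T by (simp only: open_openin)
    ultimately show "openin euclidean T \<and> euclidean closure_of T = topspace euclidean"
      by (simp only: euclidean_closure_of topspace_euclidean)
  qed
  then show ?thesis by simp
qed

lemma dense_closed_all:
  assumes "closure D = UNIV" "closed S" "D \<subseteq> S" shows "S = UNIV"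
  using assms closure_minimal by blast



definition ps :: "(nat \<Rightarrow> 'a \<Rightarrow> complex) \<Rightarrow> nat \<Rightarrow> 'a \<Rightarrow> real" where
  "ps g N x = (\<Sum>i<N. (cmod (g i x))\<^sup>2)"
definition nu :: "(nat \<Rightarrow> 'a \<Rightarrow> complex) \<Rightarrow> 'a \<Rightarrow> real" where
  "nu g x = (\<Sum>i. (cmod (g i x))\<^sup>2)"

lemma sum_cnj_eq: "(\<Sum>i<N. cnj (g i x) * g i x) = complex_of_real (ps g N x)"
proof -
  have "(\<Sum>i<N. cnj (g i x) * g i x) = (\<Sum>i<N. complex_of_real ((cmod (g i x))\<^sup>2))"
    by (rule sum.cong) (simp_all, metis complex_norm_square mult.commute of_real_power)
  then show ?thesis unfolding ps_def by simp
qed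

lemma ps_nonneg: "ps g N x \<ge> 0" unfolding ps_def by (simp add: sum_nonneg)

lemma cmod_sum_cnj: "cmod (\<Sum>i<N. cnj (g i x) * g i x) = ps g N x"
  using ps_nonneg[of g N x] by (simp add: sum_cnj_eq)

lemma dual_iff: "g \<in> dual_HA \<longleftrightarrow> (\<forall>i. continuous_on UNIV (g i)) \<and> (\<exists>B. \<forall>N x. ps g N x \<le> B)"
  unfolding dual_HA_def CX_def by (simp add: cmod_sum_cnj)

lemma dualD:
  assumes "g \<in> dual_HA"
  obtains B where "\<And>N x. ps g N x \<le> B" "B \<ge> 0" "\<And>x. summable (\<lambda>i. (cmod (g i x))\<^sup>2)"
     "\<And>x. nu g x \<le> B" "\<And>N x. ps g N x \<le> nu g x"
proof -
  obtain B where B: "\<And>N x. ps g N x \<le> B" using assms dual_iff by blast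
  have B0: "B \<ge> 0" using B[of 0] by (simp add: ps_def)
  have sm: "summable (\<lambda>i. (cmod (g i x))\<^sup>2)" for x
  proof (rule bounded_imp_summable[of _ B])
    fix n show "(\<Sum>k\<le>n. (cmod (g k x))\<^sup>2) \<le> B"
      using B[of "Suc n" x] unfolding ps_def lessThan_Suc_atMost .
  qed simp
  have "nu g x \<le> B" for x unfolding nu_def
    by (rule suminf_le_const[OF sm]) (use B in \<open>auto simp: ps_def\<close>)
  moreover have "ps g N x \<le> nu g x" for N x unfolding nu_def ps_def
    by (rule sum_le_suminf[OF sm]) auto
  ultimately show ?thesis using that B B0 sm by blast
qed

lemma dual_cont: "g \<in> dual_HA \<Longrightarrow> continuous_on UNIV (g i)"
  using dual_iff by blast

lemma dual_compare:
  assumes "g \<in> dual_HA" "\<And>i. continuous_on UNIV (h i)" "\<And>i x. cmod (h i x) \<le> cmod (g i x)"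
  shows "h \<in> dual_HA"
proof -
  obtain B where B: "\<And>N x. ps g N x \<le> B" using assms dual_iff by blast
  have hg: "ps h N x \<le> ps g N x" for N x unfolding ps_def
    by (rule sum_mono) (simp add: assms(3) power_mono)
  have "ps h N x \<le> B" for N x using hg[of N x] B[of N x] by linarith
  then show ?thesis using assms(2) unfolding dual_iff by blast
qed

lemma dual_add:
  assumes "f \<in> dual_HA" "g \<in> dual_HA"
  shows "(\<lambda>i x. f i x + g i x) \<in> dual_HA"
proof -
  obtain B where B: "\<And>N x. ps f N x \<le> B" using assms dual_iff by blast
  obtain C where C: "\<And>N x. ps g N x \<le> C" using assms dual_iff by blast
  have "(cmod (f i x + g i x))\<^sup>2 \<le> 2 * (cmod (f i x))\<^sup>2 + 2 * (cmod (g i x))\<^sup>2" for i x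
  proof -
    have "cmod (f i x + g i x) \<le> cmod (f i x) + cmod (g i x)" by (rule norm_triangle_ineq)
    then have "(cmod (f i x + g i x))\<^sup>2 \<le> (cmod (f i x) + cmod (g i x))\<^sup>2"
      by (simp add: power_mono)
    also have "\<dots> \<le> 2 * (cmod (f i x))\<^sup>2 + 2 * (cmod (g i x))\<^sup>2"
    proof -
      have "0 \<le> (cmod (f i x) - cmod (g i x))\<^sup>2" by simp
      then show ?thesis by (simp add: power2_sum power2_diff)
    qed
    finally show ?thesis .
  qed
  then have P: "ps (\<lambda>i x. f i x + g i x) N x \<le> 2 * ps f N x + 2 * ps g N x" for N x
    unfolding ps_def by (simp add: sum_distrib_left sum.distrib[symmetric] sum_mono)
  have "ps (\<lambda>i x. f i x + g i x) N x \<le> 2*B + 2*C" for N x using B[of N x] C[of N x] P[of N x]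
    by linarith
  moreover have "continuous_on UNIV (\<lambda>x. f i x + g i x)" for i
    using assms dual_cont by (intro continuous_intros) auto
  ultimately show ?thesis unfolding dual_iff by blast
qed

lemma CX_bounded:
  assumes "compact (UNIV::'a::topological_space set)" "a \<in> (CX::('a \<Rightarrow> complex) set)"
  shows "\<exists>K. \<forall>x. cmod (a x) \<le> K"
proof -
  have "compact (range a)" using assms by (simp add: CX_def compact_continuous_image)
  then have "bounded (range a)" by (rule compact_imp_bounded)
  then obtain K where "\<forall>y\<in>range a. norm y \<le> K" unfolding bounded_iff by blast
  then show ?thesis by auto
qed

lemma dual_mult:
  assumes "compact (UNIV::'a::topological_space set)" "f \<in> dual_HA" "a \<in> (CX::('a \<Rightarrow> complex) set)"
  shows "(\<lambda>i x. f i x * a x) \<in> dual_HA"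
proof -
  obtain B where B: "\<And>N x. ps f N x \<le> B" using assms dual_iff by blast
  obtain K where K: "\<And>x. cmod (a x) \<le> K" using CX_bounded assms by blast
  have "ps (\<lambda>i x. f i x * a x) N x = (cmod (a x))\<^sup>2 * ps f N x" for N x
    unfolding ps_def by (simp add: sum_distrib_left norm_mult power_mult_distrib mult.commute)
  also have "\<dots> N x \<le> K\<^sup>2 * B" for N x
    using B[of N x] K[of x] by (intro mult_mono power_mono) (auto simp: ps_nonneg)
  finally have "ps (\<lambda>i x. f i x * a x) N x \<le> K\<^sup>2 * B" for N x .
  moreover have "continuous_on UNIV (\<lambda>x. f i x * a x)" for i
    using assms dual_cont by (intro continuous_intros) (auto simp: CX_def)
  ultimately show ?thesis unfolding dual_iff by blast
qed

lemma dual_hat: "hat_e i \<in> dual_HA"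
proof -
  have "ps (hat_e i) N x \<le> 1" for N x
  proof -
    have "ps (hat_e i) N x = (\<Sum>j<N. if j = i then 1 else 0)" unfolding ps_def hat_e_def
      by (rule sum.cong) auto
    also have "\<dots> \<le> 1" by (simp add: sum.delta)
    finally show ?thesis .
  qed
  moreover have "continuous_on UNIV (hat_e i j)" for j unfolding hat_e_def by auto
  ultimately show ?thesis unfolding dual_iff by blast
qed

lemma dn_le:
  assumes "\<And>N x. ps g N x \<le> D"
  shows "dual_norm g \<le> sqrt D"
proof -
  have "Sup {cmod (\<Sum>i<N. cnj (g i x) * g i x) | N x. True} \<le> D"
    by (rule cSup_least) (auto simp: cmod_sum_cnj assms)
  then show ?thesis unfolding dual_norm_def by simp
qed

lemma ps_le_dn_aux:
  assumes "g \<in> dual_HA"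
  shows "ps g N x \<le> (dual_norm g)\<^sup>2 \<and> dual_norm g \<ge> 0"
proof -
  obtain B where B: "\<And>N x. ps g N x \<le> B" using assms dual_iff by blast
  let ?S = "{cmod (\<Sum>i<N. cnj (g i x) * g i x) | N x. True}"
  have S: "?S = {ps g N x | N x. True}" by (simp add: cmod_sum_cnj)
  have bdd: "bdd_above ?S" unfolding S bdd_above_def using B by blast
  have "ps g N x \<le> Sup ?S" by (rule cSup_upper[OF _ bdd]) (unfold S, blast)
  moreover have "Sup ?S \<ge> 0" using \<open>ps g N x \<le> Sup ?S\<close> ps_nonneg[of g N x] by linarith
  ultimately show ?thesis unfolding dual_norm_def by simp
qed

lemma ps_le_dn: "g \<in> dual_HA \<Longrightarrow> ps g N x \<le> (dual_norm g)\<^sup>2"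
  using ps_le_dn_aux by blast
lemma dn_nonneg: "g \<in> dual_HA \<Longrightarrow> dual_norm g \<ge> 0"
  using ps_le_dn_aux by blast



definition sig :: "(nat \<Rightarrow> 'a \<Rightarrow> complex) \<Rightarrow> (nat \<Rightarrow> 'a \<Rightarrow> complex) \<Rightarrow> 'a \<Rightarrow> complex" where
  "sig F f x = (\<Sum>i. cnj (F i x) * f i x)"

lemma cs_inf:
  fixes a b :: "nat \<Rightarrow> complex"
  assumes sa: "summable (\<lambda>i. (cmod (a i))\<^sup>2)" and sb: "summable (\<lambda>i. (cmod (b i))\<^sup>2)"
  shows "summable (\<lambda>i. cnj (a i) * b i) \<and>
     cmod (\<Sum>i. cnj (a i) * b i) \<le> sqrt (\<Sum>i. (cmod (a i))\<^sup>2) * sqrt (\<Sum>i. (cmod (b i))\<^sup>2)"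
proof -
  let ?A = "\<Sum>i. (cmod (a i))\<^sup>2" and ?B = "\<Sum>i. (cmod (b i))\<^sup>2"
  have fin: "(\<Sum>i<n. cmod (a i) * cmod (b i)) \<le> sqrt ?A * sqrt ?B" for n
  proof -
    have "(\<Sum>i<n. cmod (a i) * cmod (b i))\<^sup>2 \<le> (\<Sum>i<n. (cmod (a i))\<^sup>2) * (\<Sum>i<n. (cmod (b i))\<^sup>2)"
      by (rule Cauchy_Schwarz_ineq_sum)
    then have "(\<Sum>i<n. cmod (a i) * cmod (b i)) \<le> sqrt ((\<Sum>i<n. (cmod (a i))\<^sup>2) * (\<Sum>i<n. (cmod (b i))\<^sup>2))"
      by (rule real_le_rsqrt)
    also have "\<dots> \<le> sqrt (?A * ?B)"
      using sum_le_suminf[OF sa, of "{..<n}"] sum_le_suminf[OF sb, of "{..<n}"]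
      by (intro real_sqrt_le_mono mult_mono) (auto simp: sum_nonneg suminf_nonneg[OF sa])
    finally show ?thesis by (simp add: real_sqrt_mult)
  qed
  have nt: "cmod (cnj (a i) * b i) = cmod (a i) * cmod (b i)" for i by (simp add: norm_mult)
  have sn: "summable (\<lambda>i. cmod (cnj (a i) * b i))"
  proof (rule bounded_imp_summable[of _ "sqrt ?A * sqrt ?B"])
    fix n show "(\<Sum>k\<le>n. cmod (cnj (a k) * b k)) \<le> sqrt ?A * sqrt ?B"
      using fin[of "Suc n"] unfolding nt lessThan_Suc_atMost .
  qed simp
  have "cmod (\<Sum>i. cnj (a i) * b i) \<le> (\<Sum>i. cmod (cnj (a i) * b i))" by (rule summable_norm[OF sn])
  also have "\<dots> \<le> sqrt ?A * sqrt ?B"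
    by (rule suminf_le_const[OF sn]) (simp add: nt fin)
  finally show ?thesis using summable_norm_cancel[OF sn] by blast
qed

lemma dual_summable: "g \<in> dual_HA \<Longrightarrow> summable (\<lambda>i. (cmod (g i x))\<^sup>2)"
proof -
  assume "g \<in> dual_HA"
  then obtain B where B: "\<And>N x. ps g N x \<le> B" unfolding dual_iff by blast
  show ?thesis
  proof (rule bounded_imp_summable[of _ B])
    fix n show "(\<Sum>k\<le>n. (cmod (g k x))\<^sup>2) \<le> B"
      using B[of "Suc n" x] unfolding ps_def lessThan_Suc_atMost .
  qed simp
qed

lemma nu_nonneg: "g \<in> dual_HA \<Longrightarrow> nu g x \<ge> 0"
  unfolding nu_def by (rule suminf_nonneg[OF dual_summable]) auto

lemma sig_summable:
  assumes "F \<in> dual_HA" "f \<in> dual_HA"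
  shows "summable (\<lambda>i. cnj (F i x) * f i x)"
  using cs_inf[of "\<lambda>i. F i x" "\<lambda>i. f i x"] dual_summable assms by blast

lemma nu_split: "g \<in> dual_HA \<Longrightarrow> nu g x - ps g N x = (\<Sum>i. (cmod (g (i+N) x))\<^sup>2)"
proof -
  assume "g \<in> dual_HA"
  from suminf_split_initial_segment[OF dual_summable[OF this], where k=N]
  show ?thesis unfolding nu_def ps_def by simp
qed

lemma sig_tail:
  assumes "F \<in> dual_HA" "f \<in> dual_HA"
  shows "cmod (sig F f x - (\<Sum>i<N. cnj (F i x) * f i x)) \<le> sqrt (nu F x - ps F N x) * sqrt (nu f x - ps f N x)"
proof -
  note sF = dual_summable[OF assms(1)] and sf = dual_summable[OF assms(2)]
  have "sig F f x - (\<Sum>i<N. cnj (F i x) * f i x) = (\<Sum>i. cnj (F (i+N) x) * f (i+N) x)"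
    unfolding sig_def using suminf_split_initial_segment[OF sig_summable[OF assms], where k=N] by simp
  also have "cmod \<dots> \<le> sqrt (\<Sum>i. (cmod (F (i+N) x))\<^sup>2) * sqrt (\<Sum>i. (cmod (f (i+N) x))\<^sup>2)"
    using cs_inf[of "\<lambda>i. F (i+N) x" "\<lambda>i. f (i+N) x"] summable_ignore_initial_segment sF sf by blast
  finally show ?thesis using nu_split[OF assms(1), where x=x and N=N] nu_split[OF assms(2), where x=x and N=N] by simp
qed

lemma sig_add:
  assumes "F \<in> dual_HA" "f \<in> dual_HA" "g \<in> dual_HA"
  shows "sig F (\<lambda>i x. f i x + g i x) x = sig F f x + sig F g x"
  unfolding sig_def using suminf_add[OF sig_summable[OF assms(1,2)] sig_summable[OF assms(1,3)]]
  by (simp add: distrib_left)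

lemma sig_mult:
  fixes a :: "'a::topological_space \<Rightarrow> complex"
  assumes "F \<in> dual_HA" "f \<in> dual_HA"
  shows "sig F (\<lambda>i x. f i x * a x) x = sig F f x * a x"
  unfolding sig_def using suminf_mult2[OF sig_summable[OF assms], where c="a x"]
  by (simp add: mult.assoc)

lemma sig_hat: "sig F (hat_e i) x = cnj (F i x)"
proof -
  have "(\<lambda>j. cnj (F j x) * hat_e i j x) = (\<lambda>j. if j = i then cnj (F j x) else 0)"
    unfolding hat_e_def by auto
  then show ?thesis unfolding sig_def using sums_unique[OF sums_single[of i "\<lambda>j. cnj (F j x)"]] by simp
qed

lemma sig_self: "F \<in> dual_HA \<Longrightarrow> sig F F x = complex_of_real (nu F x)"
proof -
  assume F: "F \<in> dual_HA"
  note sF = dual_summable[OF F]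
  have "(\<lambda>i. cnj (F i x) * F i x) = (\<lambda>i. complex_of_real ((cmod (F i x))\<^sup>2))"
    by (rule ext, metis complex_norm_square mult.commute of_real_power)
  moreover have "(\<lambda>i. complex_of_real ((cmod (F i x))\<^sup>2)) sums complex_of_real (nu F x)"
    unfolding nu_def by (rule sums_of_real) (simp add: summable_sums sF)
  ultimately show ?thesis unfolding sig_def by (simp add: sums_unique[symmetric])
qed

lemma sig_bound:
  assumes "F \<in> dual_HA" "f \<in> dual_HA" and B1: "B \<ge> 0" and B2: "\<And>x. nu F x \<le> B"
  shows "cmod (sig F f x) \<le> sqrt B * dual_norm f"
proof -
  note B = B1 B2
  note sF = dual_summable[OF assms(1)] and sf = dual_summable[OF assms(2)]
  have "nu f x \<le> (dual_norm f)\<^sup>2" for x unfolding nu_def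
    by (rule suminf_le_const[OF sf]) (use ps_le_dn[OF assms(2)] in \<open>simp add: ps_def\<close>)
  then have "sqrt (nu f x) \<le> sqrt ((dual_norm f)\<^sup>2)" for x by (rule real_sqrt_le_mono)
  then have "sqrt (nu f x) \<le> dual_norm f" for x using dn_nonneg[OF assms(2)] by simp
  moreover have "sqrt (nu F x) \<le> sqrt B" for x using B by simp
  ultimately have "sqrt (nu F x) * sqrt (nu f x) \<le> sqrt B * dual_norm f" for x
    using B(1) nu_nonneg[OF assms(2)] by (intro mult_mono) auto
  moreover have "cmod (sig F f x) \<le> sqrt (nu F x) * sqrt (nu f x)" for x
    unfolding sig_def nu_def using cs_inf[of "\<lambda>i. F i x" "\<lambda>i. f i x"] sF sf by blast
  ultimately show ?thesis by (meson order_trans)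
qed



definition trunc :: "nat \<Rightarrow> (nat \<Rightarrow> 'a \<Rightarrow> complex) \<Rightarrow> nat \<Rightarrow> 'a \<Rightarrow> complex" where
  "trunc M f = (\<lambda>i x. if i < M then f i x else 0)"
definition tailf :: "nat \<Rightarrow> (nat \<Rightarrow> 'a \<Rightarrow> complex) \<Rightarrow> nat \<Rightarrow> 'a \<Rightarrow> complex" where
  "tailf M f = (\<lambda>i x. if i < M then 0 else f i x)"

lemma dual_trunc: assumes "f \<in> dual_HA" shows "trunc M f \<in> dual_HA"
proof (rule dual_compare[OF assms])
  fix i show "continuous_on UNIV (trunc M f i)"
    unfolding trunc_def using dual_cont[OF assms] by (cases "i < M") simp_all
next
  fix i x show "cmod (trunc M f i x) \<le> cmod (f i x)" by (simp add: trunc_def)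
qed

lemma dual_tailf: assumes "f \<in> dual_HA" shows "tailf M f \<in> dual_HA"
proof (rule dual_compare[OF assms])
  fix i show "continuous_on UNIV (tailf M f i)"
    unfolding tailf_def using dual_cont[OF assms] by (cases "i < M") simp_all
next
  fix i x show "cmod (tailf M f i x) \<le> cmod (f i x)" by (simp add: tailf_def)
qed

lemma dual_zero: "(\<lambda>i x. 0) \<in> dual_HA"
  using dual_trunc[OF dual_hat, of 0 0] by (simp add: trunc_def)

lemma ps_cont: "g \<in> dual_HA \<Longrightarrow> continuous_on UNIV (ps g M)"
  unfolding ps_def using dual_cont by (intro continuous_intros) auto

lemma ps_mono: "M' \<le> M \<Longrightarrow> ps g M' y \<le> ps g M y"
  unfolding ps_def by (rule sum_mono2) auto

lemma ps_tailf: "g \<in> dual_HA \<Longrightarrow> ps (tailf M g) K z \<le> nu g z - ps g M z"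
proof -
  assume g: "g \<in> dual_HA"
  have eq: "ps (tailf M g) K z = (\<Sum>j<K - M. (cmod (g (j+M) z))\<^sup>2)"
  proof (induction K)
    case 0 then show ?case by (simp add: ps_def)
  next
    case (Suc K)
    show ?case
    proof (cases "K < M")
      case True
      then have "Suc K - M = 0" "K - M = 0" by auto
      then show ?thesis using Suc True by (simp add: ps_def tailf_def)
    next
      case False
      then have "Suc K - M = Suc (K - M)" by auto
      then show ?thesis using Suc False by (simp add: ps_def tailf_def)
    qed
  qed
  also have "\<dots> \<le> (\<Sum>j. (cmod (g (j+M) z))\<^sup>2)"
    by (rule sum_le_suminf) (auto intro: summable_ignore_initial_segment dual_summable[OF g])
  finally show ?thesis using nu_split[OF g] by simp
qed



lemma bid_CX: "\<Phi> \<in> bidual_HA \<Longrightarrow> f \<in> dual_HA \<Longrightarrow> continuous_on UNIV (\<Phi> f)"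
  unfolding bidual_HA_def CX_def by blast

lemma bid_add: "\<Phi> \<in> bidual_HA \<Longrightarrow> f \<in> dual_HA \<Longrightarrow> g \<in> dual_HA \<Longrightarrow>
   \<Phi> (\<lambda>i x. f i x + g i x) = (\<lambda>x. \<Phi> f x + \<Phi> g x)"
  unfolding bidual_HA_def by blast

lemma bid_mult: "\<Phi> \<in> bidual_HA \<Longrightarrow> f \<in> dual_HA \<Longrightarrow> a \<in> CX \<Longrightarrow>
   \<Phi> (\<lambda>i x. f i x * a x) = (\<lambda>x. \<Phi> f x * a x)"
  unfolding bidual_HA_def by blast

lemma bid_bound:
  assumes "\<Phi> \<in> bidual_HA"
  obtains C where "C \<ge> 0" "\<And>f x. f \<in> dual_HA \<Longrightarrow> cmod (\<Phi> f x) \<le> C * dual_norm f"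
proof -
  obtain C where C: "\<And>f x. f \<in> dual_HA \<Longrightarrow> cmod (\<Phi> f x) \<le> C * dual_norm f"
    using assms unfolding bidual_HA_def by blast
  have "cmod (\<Phi> f x) \<le> max C 0 * dual_norm f" if "f \<in> dual_HA" for f x
    using C[OF that, of x] mult_right_mono[OF max.cobounded1[of C 0] dn_nonneg[OF that]] by linarith
  then show ?thesis using that[of "max C 0"] by auto
qed

lemma bid_zero:
  assumes "\<Phi> \<in> bidual_HA"
  shows "\<Phi> (\<lambda>i x. 0) = (\<lambda>x. 0)"
proof -
  have "\<Phi> (\<lambda>i x. 0 + 0) = (\<lambda>x. \<Phi> (\<lambda>i x. 0) x + \<Phi> (\<lambda>i x. 0) x)"
    by (rule bid_add[OF assms dual_zero dual_zero])
  then have "\<And>x. \<Phi> (\<lambda>i x. 0) x = \<Phi> (\<lambda>i x. 0) x + \<Phi> (\<lambda>i x. 0) x" by (metis add_0)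
  then show ?thesis by (auto simp: fun_eq_iff)
qed

lemma bid_hat:
  assumes "rep_seq \<Phi> = F"
  shows "\<Phi> (hat_e i) x = cnj (F i x)"
proof -
  have "cnj (\<Phi> (hat_e i) x) = F i x" using fun_cong[OF fun_cong[OF assms, of i], of x]
    unfolding rep_seq_def by simp
  then show ?thesis by (metis complex_cnj_cnj)
qed

lemma bid_trunc:
  assumes cpt: "compact (UNIV::'a::topological_space set)"
    and P: "\<Phi> \<in> bidual_HA" and R: "rep_seq \<Phi> = F" and f: "f \<in> dual_HA"
  shows "\<Phi> (trunc M f) = (\<lambda>x::'a. \<Sum>i<M. cnj (F i x) * f i x)"
proof (induction M)
  case 0
  then show ?case using bid_zero[OF P] by (simp add: trunc_def)
next
  case (Suc M)
  have fM: "f M \<in> CX" using f dual_cont by (simp add: CX_def)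
  have eq: "trunc (Suc M) f = (\<lambda>i x. trunc M f i x + hat_e M i x * f M x)"
    by (auto simp: trunc_def hat_e_def fun_eq_iff)
  have "\<Phi> (trunc (Suc M) f) = (\<lambda>x. \<Phi> (trunc M f) x + \<Phi> (\<lambda>i x. hat_e M i x * f M x) x)"
    unfolding eq by (rule bid_add[OF P dual_trunc[OF f] dual_mult[OF cpt dual_hat fM]])
  also have "\<Phi> (\<lambda>i x. hat_e M i x * f M x) = (\<lambda>x. \<Phi> (hat_e M) x * f M x)"
    by (rule bid_mult[OF P dual_hat fM])
  finally show ?case using Suc bid_hat[OF R] by simp
qed

lemma bid_split:
  assumes "\<Phi> \<in> bidual_HA" "f \<in> dual_HA"
  shows "\<Phi> f x = \<Phi> (trunc M f) x + \<Phi> (tailf M f) x"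
proof -
  have "f = (\<lambda>i x. trunc M f i x + tailf M f i x)" by (auto simp: trunc_def tailf_def fun_eq_iff)
  then have "\<Phi> f = \<Phi> (\<lambda>i x. trunc M f i x + tailf M f i x)" by simp
  also have "\<dots> = (\<lambda>x. \<Phi> (trunc M f) x + \<Phi> (tailf M f) x)"
    by (rule bid_add[OF assms(1) dual_trunc dual_tailf]) (use assms in auto)
  finally show ?thesis by simp
qed



lemma loc:
  fixes \<Phi> :: "(nat \<Rightarrow> 'a::t2_space \<Rightarrow> complex) \<Rightarrow> 'a \<Rightarrow> complex" and y :: 'a
  assumes cpt: "compact (UNIV::'a::t2_space set)"
    and P: "\<Phi> \<in> bidual_HA" and C: "C \<ge> 0" "\<And>f x. f \<in> dual_HA \<Longrightarrow> cmod (\<Phi> f x) \<le> C * dual_norm f"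
    and g: "g \<in> dual_HA" and W: "open W" "y \<in> W" and d: "\<And>z N. z \<in> W \<Longrightarrow> ps g N z \<le> \<delta>\<^sup>2" "\<delta> \<ge> 0"
  shows "cmod (\<Phi> g y) \<le> C * \<delta>"
proof -
  obtain a :: "'a \<Rightarrow> real" where a: "continuous_on UNIV a" "\<And>z. 0 \<le> a z \<and> a z \<le> 1" "a y = 1"
    "\<And>z. z \<notin> W \<Longrightarrow> a z = 0"
    using bump[OF cpt W] by blast
  let ?a = "\<lambda>z. complex_of_real (a z)"
  have aCX: "?a \<in> CX" unfolding CX_def using a(1) by (auto intro: continuous_intros)
  let ?g = "\<lambda>i x. g i x * ?a x"
  have ga: "?g \<in> dual_HA" by (rule dual_mult[OF cpt g aCX])
  have "ps ?g N z \<le> \<delta>\<^sup>2" for N z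
  proof (cases "z \<in> W")
    case True
    have t: "(cmod (g i z * complex_of_real (a z)))\<^sup>2 = (a z)\<^sup>2 * (cmod (g i z))\<^sup>2" for i
      by (simp add: norm_mult power_mult_distrib mult.commute)
    have "ps ?g N z = (a z)\<^sup>2 * ps g N z"
      unfolding ps_def sum_distrib_left by (rule sum.cong) (simp_all only: t)
    also have "\<dots> \<le> 1 * \<delta>\<^sup>2"
      using a(2)[of z] d(1)[OF True, of N] ps_nonneg[of g N z]
      by (intro mult_mono) (auto simp: power_le_one)
    finally show ?thesis by simp
  next
    case False
    then show ?thesis using a(4) by (simp add: ps_def)
  qed
  then have "dual_norm ?g \<le> sqrt (\<delta>\<^sup>2)" by (rule dn_le)
  then have "dual_norm ?g \<le> \<delta>" using d(2) by simp
  have "\<Phi> ?g = (\<lambda>x. \<Phi> g x * ?a x)" by (rule bid_mult[OF P g aCX])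
  then have "\<Phi> g y = \<Phi> ?g y" using a(3) by simp
  also have "cmod \<dots> \<le> C * dual_norm ?g" by (rule C(2)[OF ga])
  also have "\<dots> \<le> C * \<delta>" using \<open>dual_norm ?g \<le> \<delta>\<close> C(1) by (simp add: mult_left_mono)
  finally show ?thesis .
qed

lemma small_tail:
  assumes g: "g \<in> dual_HA" and V: "open V" "V \<noteq> {}" and e: "\<eta> > 0"
  shows "\<exists>y W M. y \<in> W \<and> open W \<and> W \<subseteq> V \<and> M \<ge> N0 \<and> (\<forall>z\<in>W. nu g z - ps g M z < \<eta>)"
proof -
  obtain B where B: "\<And>x. nu g x \<le> B" using dualD[OF g] by metis
  let ?S = "Sup (nu g ` V)"
  have bdd: "bdd_above (nu g ` V)" using B by (auto simp: bdd_above_def)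
  have "?S - \<eta>/2 < ?S" using e by simp
  moreover have ne: "nu g ` V \<noteq> {}" using V(2) by simp
  ultimately have "\<exists>v\<in>nu g ` V. ?S - \<eta>/2 < v" using less_cSup_iff[OF ne bdd] by blast
  then obtain y where y: "y \<in> V" "?S - \<eta>/2 < nu g y" by blast
  have "(\<lambda>n. ps g n y) \<longlonglongrightarrow> nu g y"
    unfolding ps_def nu_def by (rule summable_LIMSEQ[OF dual_summable[OF g]])
  then have "eventually (\<lambda>n. ?S - \<eta>/2 < ps g n y) sequentially"
    using y(2) order_tendstoD(1) by blast
  then obtain M' where M': "?S - \<eta>/2 < ps g M' y" using eventually_sequentially by auto
  define M where "M = max M' N0"
  have "M' \<le> M" unfolding M_def by simp
  then have yM: "?S - \<eta>/2 < ps g M y" using M' ps_mono[of M' M g y] by linarith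
  define W where "W = V \<inter> {z. ?S - \<eta>/2 < ps g M z}"
  have "open W" unfolding W_def
    by (intro open_Int V(1) open_Collect_less ps_cont[OF g] continuous_intros)
  moreover have "nu g z - ps g M z < \<eta>" if "z \<in> W" for z
  proof -
    have zV: "z \<in> V" and zp: "?S - \<eta>/2 < ps g M z" using that unfolding W_def by auto
    have "nu g z \<le> ?S" by (rule cSup_upper[OF _ bdd]) (use zV in simp)
    then show ?thesis using zp e by linarith
  qed
  moreover have "y \<in> W" unfolding W_def using y(1) yM by simp
  moreover have "W \<subseteq> V" unfolding W_def by blast
  moreover have "N0 \<le> M" unfolding M_def by simp
  ultimately show ?thesis by blast
qed



lemma isCont_nbhd:
  assumes "isCont f x" "open t" "f x \<in> t"
  obtains S where "open S" "x \<in> S" "\<And>y. y \<in> S \<Longrightarrow> f y \<in> t"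
  using assms continuous_at_open by metis

lemma forward:
  fixes \<Phi> :: "(nat \<Rightarrow> 'a::t2_space \<Rightarrow> complex) \<Rightarrow> 'a \<Rightarrow> complex" and x :: 'a
  assumes cpt: "compact (UNIV::'a set)" and P: "\<Phi> \<in> bidual_HA" and R: "rep_seq \<Phi> = F"
    and Fd: "F \<in> dual_HA" and fd: "f \<in> dual_HA" and cx: "isCont (nu F) x"
  shows "\<Phi> f x = sig F f x"
proof -
  obtain C where C0: "C \<ge> 0" and C: "\<And>f x. f \<in> dual_HA \<Longrightarrow> cmod (\<Phi> f x) \<le> C * dual_norm f"
    using bid_bound[OF P] by blast
  obtain Bf where Bf1: "\<And>N x. ps f N x \<le> Bf" and Bf0: "Bf \<ge> 0"
    and Bf3: "\<And>x. summable (\<lambda>i. (cmod (f i x))\<^sup>2)" and Bf: "\<And>x. nu f x \<le> Bf"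
    and Bf4: "\<And>N x. ps f N x \<le> nu f x"
    by (rule dualD[OF fd]) blast
  define K where "K = C + 3 * sqrt (3 * Bf)"
  have K0: "K \<ge> 0" unfolding K_def using C0 Bf0 by simp
  define d where "d = cmod (\<Phi> f x - sig F f x)"
  have key: "d \<le> \<eta> + K * sqrt \<eta>" if eta: "\<eta> > 0" for \<eta>
  proof -
    let ?T = "sqrt \<eta> * sqrt (3 * Bf)"
    have tailest: "cmod (sig F f y - (\<Sum>i<M. cnj (F i y) * f i y)) \<le> ?T"
      if h: "nu F y - ps F M y \<le> 3 * \<eta>" for y M
    proof -
      have "cmod (sig F f y - (\<Sum>i<M. cnj (F i y) * f i y)) \<le> sqrt (nu F y - ps F M y) * sqrt (nu f y - ps f M y)"
        by (rule sig_tail[OF Fd fd])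
      also have "\<dots> \<le> sqrt (3 * \<eta>) * sqrt Bf"
      proof (rule mult_mono)
        show "sqrt (nu F y - ps F M y) \<le> sqrt (3 * \<eta>)" using h by simp
        have "nu f y - ps f M y \<le> Bf" using Bf[of y] ps_nonneg[of f M y] by linarith
        then show "sqrt (nu f y - ps f M y) \<le> sqrt Bf" by simp
      qed (use eta Bf4[of M y] in simp_all)
      also have "\<dots> = ?T" by (simp add: real_sqrt_mult)
      finally show ?thesis .
    qed
    have "(\<lambda>n. ps F n x) \<longlonglongrightarrow> nu F x"
      unfolding ps_def nu_def by (rule summable_LIMSEQ[OF dual_summable[OF Fd]])
    then have "eventually (\<lambda>n. nu F x - \<eta> < ps F n x) sequentially"
      by (rule order_tendstoD(1)) (use eta in simp)
    then obtain N where N: "nu F x - \<eta> < ps F N x" by (auto simp: eventually_sequentially)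
    obtain U1 where U1: "open U1" "x \<in> U1" "\<And>y. y \<in> U1 \<Longrightarrow> nu F y \<in> {..< nu F x + \<eta>}"
      by (rule isCont_nbhd[OF cx, where t="{..< nu F x + \<eta>}"]) (use eta in auto)
    define U2 where "U2 = {y. ps F N x - \<eta> < ps F N y}"
    have oU2: "open U2" unfolding U2_def
      by (rule open_Collect_less) (auto intro: ps_cont[OF Fd] continuous_intros)
    define U where "U = U1 \<inter> U2"
    have oU: "open U" unfolding U_def using U1(1) oU2 by blast
    have xU: "x \<in> U" unfolding U_def U2_def using U1(2) eta by simp
    have hU: "nu F y - ps F M y \<le> 3 * \<eta>" if "y \<in> U" "N \<le> M" for y M
    proof -
      have a: "nu F y < nu F x + \<eta>" using U1(3)[of y] that(1) unfolding U_def by simp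
      have b: "ps F N x - \<eta> < ps F N y" using that(1) unfolding U_def U2_def by simp
      have c: "ps F N y \<le> ps F M y" by (rule ps_mono[OF that(2)])
      show ?thesis using a b c N by linarith
    qed
    define D where "D = (\<lambda>y. \<Phi> f y - \<Phi> (trunc N f) y)"
    have Deq: "D y = \<Phi> f y - (\<Sum>i<N. cnj (F i y) * f i y)" for y
      unfolding D_def bid_trunc[OF cpt P R fd] by simp
    have "continuous_on UNIV D" unfolding D_def
      using bid_CX[OF P fd] bid_CX[OF P dual_trunc[OF fd]] by (intro continuous_intros)
    then have cD: "isCont D x" using continuous_on_eq_continuous_at[of UNIV D] by simp
    obtain V0 where V0: "open V0" "x \<in> V0" "\<And>y. y \<in> V0 \<Longrightarrow> D y \<in> ball (D x) \<eta>"
      by (rule isCont_nbhd[OF cD, where t="ball (D x) \<eta>"]) (use eta in auto)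
    define V where "V = U \<inter> V0"
    have oV: "open V" unfolding V_def using oU V0(1) by blast
    have neV: "V \<noteq> {}" unfolding V_def using xU V0(2) by blast
    obtain y W M where yW: "y \<in> W" and oW: "open W" and WV: "W \<subseteq> V" and NM: "N \<le> M"
      and Wt: "\<forall>z\<in>W. nu f z - ps f M z < \<eta>"
      using small_tail[OF fd oV neV eta, of N] by blast
    have yU: "y \<in> U" and yV0: "y \<in> V0" using yW WV unfolding V_def by auto
    have pt: "ps (tailf M f) K' z \<le> (sqrt \<eta>)\<^sup>2" if "z \<in> W" for z K'
      using ps_tailf[OF fd, of M K' z] Wt that eta by auto
    have tl: "cmod (\<Phi> (tailf M f) y) \<le> C * sqrt \<eta>"
      by (rule loc[OF cpt P C0 C dual_tailf[OF fd] oW yW pt]) (use eta in auto)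
    have sp: "\<Phi> f y = (\<Sum>i<M. cnj (F i y) * f i y) + \<Phi> (tailf M f) y"
      using bid_split[OF P fd, of y M] bid_trunc[OF cpt P R fd, of M] by simp
    have e1: "cmod (\<Phi> f y - sig F f y) \<le> C * sqrt \<eta> + ?T"
    proof -
      have "\<Phi> f y - sig F f y = \<Phi> (tailf M f) y - (sig F f y - (\<Sum>i<M. cnj (F i y) * f i y))"
        using sp by simp
      also have "cmod \<dots> \<le> cmod (\<Phi> (tailf M f) y) + cmod (sig F f y - (\<Sum>i<M. cnj (F i y) * f i y))"
        by (rule norm_triangle_ineq4)
      finally show ?thesis using tl tailest[OF hU[OF yU NM]] by linarith
    qed
    have e2: "cmod (D y) \<le> C * sqrt \<eta> + 2 * ?T"
    proof -
      have "D y = (\<Phi> f y - sig F f y) + (sig F f y - (\<Sum>i<N. cnj (F i y) * f i y))"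
        unfolding Deq by simp
      also have "cmod \<dots> \<le> cmod (\<Phi> f y - sig F f y) + cmod (sig F f y - (\<Sum>i<N. cnj (F i y) * f i y))"
        by (rule norm_triangle_ineq)
      finally show ?thesis using e1 tailest[OF hU[OF yU order_refl]] by linarith
    qed
    have e3: "cmod (D x) \<le> \<eta> + C * sqrt \<eta> + 2 * ?T"
    proof -
      have "dist (D x) (D y) < \<eta>" using V0(3)[OF yV0] by simp
      then have "cmod (D x - D y) < \<eta>" by (simp add: dist_norm)
      moreover have "cmod (D x) \<le> cmod (D x - D y) + cmod (D y)"
        using norm_triangle_ineq[of "D x - D y" "D y"] by simp
      ultimately show ?thesis using e2 by linarith
    qed
    have "d \<le> cmod (D x) + ?T"
    proof -
      have "\<Phi> f x - sig F f x = D x - (sig F f x - (\<Sum>i<N. cnj (F i x) * f i x))"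
        unfolding Deq by simp
      also have "cmod \<dots> \<le> cmod (D x) + cmod (sig F f x - (\<Sum>i<N. cnj (F i x) * f i x))"
        by (rule norm_triangle_ineq4)
      finally show ?thesis unfolding d_def using tailest[OF hU[OF xU order_refl]] by linarith
    qed
    moreover have "K * sqrt \<eta> = C * sqrt \<eta> + 3 * ?T"
      unfolding K_def by (simp add: algebra_simps)
    ultimately show ?thesis using e3 by linarith
  qed
  have "d = 0"
  proof (rule ccontr)
    assume "d \<noteq> 0"
    then have d0: "d > 0" unfolding d_def by simp
    define \<eta> where "\<eta> = min 1 ((d / (2 * (1 + K)))\<^sup>2)"
    have e0: "\<eta> > 0" unfolding \<eta>_def using d0 K0 by simp
    have e1: "\<eta> \<le> 1" unfolding \<eta>_def by simp
    have "\<eta> \<le> (d / (2 * (1 + K)))\<^sup>2" unfolding \<eta>_def by (rule min.cobounded2)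
    then have "sqrt \<eta> \<le> sqrt ((d / (2 * (1 + K)))\<^sup>2)" by (rule real_sqrt_le_mono)
    also have "\<dots> = d / (2 * (1 + K))" using d0 K0 by simp
    finally have s1: "sqrt \<eta> \<le> d / (2 * (1 + K))" .
    have s2: "\<eta> \<le> sqrt \<eta>"
    proof -
      have "sqrt \<eta> \<le> 1" using e1 by simp
      then have "sqrt \<eta> * sqrt \<eta> \<le> 1 * sqrt \<eta>" by (rule mult_right_mono) (use e0 in simp)
      then show ?thesis using e0 by simp
    qed
    have "d \<le> \<eta> + K * sqrt \<eta>" by (rule key[OF e0])
    also have "\<dots> \<le> (1 + K) * sqrt \<eta>" using s2 by (simp add: algebra_simps)
    also have "\<dots> \<le> (1 + K) * (d / (2 * (1 + K)))" using s1 K0 by (intro mult_left_mono) simp_all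
    also have "\<dots> = d / 2" using K0 by (simp add: field_simps)
    finally show False using d0 by simp
  qed
  then show ?thesis unfolding d_def by simp
qed



lemma nu_ge_ps: "g \<in> dual_HA \<Longrightarrow> ps g N x \<le> nu g x"
  using dualD by metis

lemma E_dense:
  fixes F :: "nat \<Rightarrow> 'a::t2_space \<Rightarrow> complex"
  assumes cpt: "compact (UNIV::'a set)" and Fd: "F \<in> dual_HA"
  shows "closure {x. isCont (nu F) x} = UNIV"
proof -
  define G :: "nat \<Rightarrow> 'a set" where
    "G n = \<Union>{U. open U \<and> (\<exists>N. \<forall>y\<in>U. nu F y - ps F N y < 1 / Suc n)}" for n
  have oG: "open (G n)" for n unfolding G_def by (rule open_Union) blast
  have dG: "V \<inter> G n \<noteq> {}" if "open V" "V \<noteq> {}" for n V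
  proof -
    have "(1::real) / Suc n > 0" by simp
    from small_tail[OF Fd that this, of 0] obtain y W M where
      "y \<in> W" "open W" "W \<subseteq> V" "\<forall>z\<in>W. nu F z - ps F M z < 1 / Suc n" by blast
    then have "y \<in> G n" "y \<in> V" unfolding G_def by blast+
    then show ?thesis by blast
  qed
  have cl: "closure (\<Inter>n. G n) = UNIV" by (rule baire_dense[OF cpt oG dG])
  have sub: "(\<Inter>n. G n) \<subseteq> {x. isCont (nu F) x}"
  proof
    fix x assume x: "x \<in> (\<Inter>n. G n)"
    have "(nu F \<longlongrightarrow> nu F x) (at x)"
    proof (rule tendstoI)
      fix e :: real assume e: "e > 0"
      obtain n where n: "1 / Suc n < e / 3" using e by (metis divide_pos_pos nat_approx_posE zero_less_numeral)
      have "x \<in> G n" using x by blast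
      then obtain U N where U: "open U" "x \<in> U" "\<And>y. y \<in> U \<Longrightarrow> nu F y - ps F N y < 1 / Suc n"
        unfolding G_def by blast
      have "isCont (ps F N) x" using ps_cont[OF Fd, of N] continuous_on_eq_continuous_at[of UNIV "ps F N"] by blast
      then have "((ps F N) \<longlongrightarrow> ps F N x) (at x)" by (simp add: isCont_def)
      then have ev1: "eventually (\<lambda>y. dist (ps F N y) (ps F N x) < e / 3) (at x)"
        by (rule tendstoD) (use e in simp)
      have ev2: "eventually (\<lambda>y. y \<in> U) (at x)"
        unfolding eventually_at_topological using U(1,2) by blast
      show "eventually (\<lambda>y. dist (nu F y) (nu F x) < e) (at x)"
        using ev1 ev2
      proof eventually_elim
        case (elim y)
        have a: "0 \<le> nu F y - ps F N y" "0 \<le> nu F x - ps F N x"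
          using nu_ge_ps[OF Fd] by (simp_all add: diff_ge_0_iff_ge)
        have b: "nu F y - ps F N y < 1 / Suc n" "nu F x - ps F N x < 1 / Suc n"
          using U(3)[OF elim(2)] U(3)[OF U(2)] by simp_all
        have c: "\<bar>ps F N y - ps F N x\<bar> < e / 3" using elim(1) by (simp add: dist_real_def)
        show ?case unfolding dist_real_def using a b c n by linarith
      qed
    qed
    then show "x \<in> {x. isCont (nu F) x}" by (simp add: isCont_def)
  qed
  show ?thesis using cl sub closure_mono by blast
qed

lemma uniq_dense:
  fixes \<alpha> \<beta> :: "'a::topological_space \<Rightarrow> complex"
  assumes "closure E = UNIV" "continuous_on UNIV \<alpha>" "continuous_on UNIV \<beta>" "\<forall>x\<in>E. \<alpha> x = \<beta> x"
  shows "\<alpha> = \<beta>"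
proof -
  have "closed {x. \<alpha> x = \<beta> x}" by (rule closed_Collect_eq[OF assms(2,3)])
  then have "{x. \<alpha> x = \<beta> x} = UNIV" by (rule dense_closed_all[OF assms(1)]) (use assms(4) in blast)
  then show ?thesis by (auto simp: fun_eq_iff)
qed



theorem lemma3p3:
  fixes F :: "nat \<Rightarrow> 'a::t2_space \<Rightarrow> complex"
  assumes "compact (UNIV :: 'a set)"
    and "F \<in> dual_HA"
  defines "E \<equiv> {x. isCont (\<lambda>y. \<Sum>i. cnj (F i y) * F i y) x}"
  shows "((\<exists>\<Phi>\<in>bidual_HA. rep_seq \<Phi> = F) \<longleftrightarrow>
          (\<forall>f\<in>dual_HA. \<exists>\<alpha>\<in>CX. \<forall>x\<in>E. (\<Sum>i. cnj (F i x) * f i x) = \<alpha> x))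
      \<and> (\<forall>\<Phi>\<in>bidual_HA. rep_seq \<Phi> = F \<longrightarrow>
          (\<forall>f\<in>dual_HA. \<forall>\<alpha>\<in>CX. (\<forall>x\<in>E. (\<Sum>i. cnj (F i x) * f i x) = \<alpha> x) \<longrightarrow> \<Phi> f = \<alpha>))"
proof -
  note cpt = assms(1) and Fd = assms(2)
  have sigF: "(\<lambda>y. \<Sum>i. cnj (F i y) * F i y) = (\<lambda>y. complex_of_real (nu F y))"
    using sig_self[OF Fd] unfolding sig_def by (rule ext)
  have Eeq: "E = {x. isCont (nu F) x}"
  proof -
    have "isCont (\<lambda>y. complex_of_real (nu F y)) x \<longleftrightarrow> isCont (nu F) x" for x
    proof
      assume "isCont (\<lambda>y. complex_of_real (nu F y)) x"
      then have "isCont (\<lambda>y. Re (complex_of_real (nu F y))) x" by (rule isCont_Re)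
      then show "isCont (nu F) x" by simp
    next
      assume "isCont (nu F) x"
      then show "isCont (\<lambda>y. complex_of_real (nu F y)) x" by (intro continuous_intros)
    qed
    then show ?thesis unfolding E_def sigF by simp
  qed
  have Ed: "closure E = UNIV" unfolding Eeq by (rule E_dense[OF cpt Fd])
  have fw: "\<forall>x\<in>E. (\<Sum>i. cnj (F i x) * f i x) = \<Phi> f x"
    if "\<Phi> \<in> bidual_HA" "rep_seq \<Phi> = F" "f \<in> dual_HA" for \<Phi> f
  proof
    fix x assume "x \<in> E"
    then have "isCont (nu F) x" unfolding Eeq by simp
    from forward[OF cpt that(1,2) Fd that(3) this] show "(\<Sum>i. cnj (F i x) * f i x) = \<Phi> f x"
      unfolding sig_def by simp
  qed
  have partB: "\<forall>\<Phi>\<in>bidual_HA. rep_seq \<Phi> = F \<longrightarrow>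
          (\<forall>f\<in>dual_HA. \<forall>\<alpha>\<in>CX. (\<forall>x\<in>E. (\<Sum>i. cnj (F i x) * f i x) = \<alpha> x) \<longrightarrow> \<Phi> f = \<alpha>)"
  proof (intro ballI impI)
    fix \<Phi> f \<alpha> assume P: "\<Phi> \<in> bidual_HA" and R: "rep_seq \<Phi> = F" and f: "f \<in> dual_HA"
      and a: "\<alpha> \<in> CX" and h: "\<forall>x\<in>E. (\<Sum>i. cnj (F i x) * f i x) = \<alpha> x"
    show "\<Phi> f = \<alpha>"
      by (rule uniq_dense[OF Ed bid_CX[OF P f]]) (use a h fw[OF P R f] in \<open>auto simp: CX_def\<close>)
  qed
  have imp1: "(\<exists>\<Phi>\<in>bidual_HA. rep_seq \<Phi> = F) \<Longrightarrow>
          (\<forall>f\<in>dual_HA. \<exists>\<alpha>\<in>CX. \<forall>x\<in>E. (\<Sum>i. cnj (F i x) * f i x) = \<alpha> x)"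
  proof -
    assume "\<exists>\<Phi>\<in>bidual_HA. rep_seq \<Phi> = F"
    then obtain \<Phi> where P: "\<Phi> \<in> bidual_HA" and R: "rep_seq \<Phi> = F" by blast
    show ?thesis
    proof
      fix f :: "nat \<Rightarrow> 'a \<Rightarrow> complex" assume f: "f \<in> dual_HA"
      have "\<Phi> f \<in> CX" using bid_CX[OF P f] by (simp add: CX_def)
      then show "\<exists>\<alpha>\<in>CX. \<forall>x\<in>E. (\<Sum>i. cnj (F i x) * f i x) = \<alpha> x" using fw[OF P R f] by blast
    qed
  qed
  have imp2: "(\<exists>\<Phi>\<in>bidual_HA. rep_seq \<Phi> = F)"
    if H: "\<forall>f\<in>dual_HA. \<exists>\<alpha>\<in>CX. \<forall>x\<in>E. (\<Sum>i. cnj (F i x) * f i x) = \<alpha> x"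
  proof -
    define \<Phi> :: "(nat \<Rightarrow> 'a \<Rightarrow> complex) \<Rightarrow> 'a \<Rightarrow> complex" where "\<Phi> f = (SOME \<alpha>. \<alpha> \<in> CX \<and> (\<forall>x\<in>E. sig F f x = \<alpha> x))" for f
    have PhiP: "\<Phi> f \<in> CX \<and> (\<forall>x\<in>E. sig F f x = \<Phi> f x)" if f: "f \<in> dual_HA" for f
    proof -
      have "\<exists>\<alpha>. \<alpha> \<in> CX \<and> (\<forall>x\<in>E. sig F f x = \<alpha> x)" using H f unfolding sig_def by blast
      then show ?thesis unfolding \<Phi>_def by (rule someI_ex)
    qed
    have Pc: "continuous_on UNIV (\<Phi> f)" if "f \<in> dual_HA" for f
      using PhiP[OF that] by (simp add: CX_def)
    have PE: "\<And>x. x \<in> E \<Longrightarrow> \<Phi> f x = sig F f x" if "f \<in> dual_HA" for f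
      using PhiP[OF that] by simp
    have add: "\<Phi> (\<lambda>i x. f i x + g i x) = (\<lambda>x. \<Phi> f x + \<Phi> g x)" if f: "f \<in> dual_HA" and g: "g \<in> dual_HA" for f g
    proof (rule uniq_dense[OF Ed Pc[OF dual_add[OF f g]]])
      show "continuous_on UNIV (\<lambda>x. \<Phi> f x + \<Phi> g x)" using Pc[OF f] Pc[OF g] by (intro continuous_intros)
      show "\<forall>x\<in>E. \<Phi> (\<lambda>i x. f i x + g i x) x = \<Phi> f x + \<Phi> g x"
        using PE[OF dual_add[OF f g]] PE[OF f] PE[OF g] sig_add[OF Fd f g] by simp
    qed
    have mul: "\<Phi> (\<lambda>i x. f i x * a x) = (\<lambda>x. \<Phi> f x * a x)" if f: "f \<in> dual_HA" and a: "a \<in> CX" for f a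
    proof (rule uniq_dense[OF Ed Pc[OF dual_mult[OF cpt f a]]])
      show "continuous_on UNIV (\<lambda>x. \<Phi> f x * a x)" using Pc[OF f] a by (auto simp: CX_def intro: continuous_intros)
      show "\<forall>x\<in>E. \<Phi> (\<lambda>i x. f i x * a x) x = \<Phi> f x * a x"
        using PE[OF dual_mult[OF cpt f a]] PE[OF f] sig_mult[OF Fd f] by simp
    qed
    have bnd: "\<exists>C. \<forall>f\<in>dual_HA. \<forall>x. cmod (\<Phi> f x) \<le> C * dual_norm f"
    proof -
      obtain B where B0: "\<And>N x. ps F N x \<le> B" and B1: "B \<ge> 0"
        and B3: "\<And>x. summable (\<lambda>i. (cmod (F i x))\<^sup>2)" and B2: "\<And>x. nu F x \<le> B" and B4: "\<And>N x. ps F N x \<le> nu F x"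
        by (rule dualD[OF Fd]) blast
      have "\<forall>x. cmod (\<Phi> f x) \<le> sqrt B * dual_norm f" if f: "f \<in> dual_HA" for f
      proof -
        have "closed {x. cmod (\<Phi> f x) \<le> sqrt B * dual_norm f}"
          by (rule closed_Collect_le) (use Pc[OF f] in \<open>auto intro: continuous_intros\<close>)
        then have "{x. cmod (\<Phi> f x) \<le> sqrt B * dual_norm f} = UNIV"
          by (rule dense_closed_all[OF Ed]) (use PE[OF f] sig_bound[OF Fd f B1 B2] in auto)
        then show ?thesis by blast
      qed
      then show ?thesis by blast
    qed
    have "\<Phi> \<in> bidual_HA" unfolding bidual_HA_def using PhiP add mul bnd by blast
    moreover have "rep_seq \<Phi> = F"
    proof -
      have "\<Phi> (hat_e i) = (\<lambda>x. cnj (F i x))" for i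
      proof (rule uniq_dense[OF Ed Pc[OF dual_hat]])
        show "continuous_on UNIV (\<lambda>x. cnj (F i x))" using dual_cont[OF Fd] by (intro continuous_intros)
        show "\<forall>x\<in>E. \<Phi> (hat_e i) x = cnj (F i x)"
        proof
          fix x assume "x \<in> E"
          then have "\<Phi> (hat_e i) x = sig F (hat_e i) x" by (rule PE[OF dual_hat])
          also have "\<dots> = cnj (F i x)" by (rule sig_hat)
          finally show "\<Phi> (hat_e i) x = cnj (F i x)" .
        qed
      qed
      then show ?thesis unfolding rep_seq_def by (simp add: fun_eq_iff)
    qed
    ultimately show ?thesis by blast
  qed
  show ?thesis using partB imp1 imp2 by blast
qed


end
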